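(* Let $n>k\ge 1$ be integers, not both even, such that $n\neq Mk$ for every positive integer $M$. Let $\alpha=\lceil n/2\rceil-\lfloor (n-k)/2\rfloor$, $\beta=k-\alpha$, and $G=\sqrt{n/k}\,W_n^H\Sigma W_k$. Then no systematic DFT frame $G_{\mathrm{sys}}=GG_k^{-1}$ (with $G_k$ any $k\times k$ submatrix of $G$ formed by $k$ distinct rows) is tight; i.e. for every such $G_k$ there is no $c>0$ with $G_{\mathrm{sys}}^HG_{\mathrm{sys}}=cI_k$.
   Context: For a positive integer $l$, $W_l$ denotes the unitary $l\times l$ DFT matrix, $(W_l)_{r,s}=\frac{1}{\sqrt l}e^{-j2\pi(r-1)(s-1)/l}$, and $^H$ denotes conjugate transpose. $\Sigma$ is the $n\times k$ matrix $\begin{pmatrix} I_\alpha & 0\\ 0 & 0\\ 0 & I_\beta\end{pmatrix}$: its first $\alpha$ rows are $(I_\alpha\ 0)$, its last $\beta$ rows are $(0\ I_\beta)$, and its middle $n-k$ rows are zero. For any choice of $k$ distinct rows of $G$, the resulting $k\times k$ submatrix $G_k$ is invertible, and the matrix $G_{\mathrm{sys}}=GG_k^{-1}$ (an $n\times k$ matrix containing $I_k$ as a submatrix) is called a systematic DFT frame. A frame with $n\times k$ analysis operator $F$ is tight if $F^HF=cI_k$ for some $c>0$, equivalently all eigenvalues of $F^HF$ are equal. *)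

theory Defs
  imports Complex_Main "Jordan_Normal_Form.Matrix"
begin

definition ctrans :: "complex mat \<Rightarrow> complex mat" where
  "ctrans A = mat (dim_col A) (dim_row A) (\<lambda>(i,j). cnj (A $$ (j,i)))"

definition DFT :: "nat \<Rightarrow> complex mat" where
  "DFT l = mat l l (\<lambda>(r,s). complex_of_real (1 / sqrt (real l)) *
                            cis (- 2 * pi * real r * real s / real l))"

(* n x k matrix Sigma: identity I_alpha in the top-left, zero middle n-k rows,
   identity I_beta in the bottom-right (rows n-beta..n-1, columns alpha..k-1),
   with beta = k - alpha *)
definition Sigma :: "nat \<Rightarrow> nat \<Rightarrow> nat \<Rightarrow> complex mat" where
  "Sigma n k \<alpha> = mat n k (\<lambda>(i,j).
      if i < \<alpha> \<and> j = i then 1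
      else if n - (k - \<alpha>) \<le> i \<and> \<alpha> \<le> j \<and> j - \<alpha> = i - (n - (k - \<alpha>)) then 1
      else 0)"

definition Gmat :: "nat \<Rightarrow> nat \<Rightarrow> nat \<Rightarrow> complex mat" where
  "Gmat n k \<alpha> = complex_of_real (sqrt (real n / real k)) \<cdot>\<^sub>m
                  (ctrans (DFT n) * Sigma n k \<alpha> * DFT k)"

definition row_submat :: "complex mat \<Rightarrow> nat \<Rightarrow> (nat \<Rightarrow> nat) \<Rightarrow> complex mat" where
  "row_submat A k rs = mat k (dim_col A) (\<lambda>(i,j). A $$ (rs i, j))"

definition tight_frame :: "complex mat \<Rightarrow> bool" where
  "tight_frame F \<longleftrightarrow> (\<exists>c::real. c > 0 \<and>
       ctrans F * F = complex_of_real c \<cdot>\<^sub>m 1\<^sub>m (dim_col F))"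

end

theory Submission
  imports Defs
begin


lemma cis_eq_1_int: assumes "cis x = 1" shows "\<exists>t::int. x = of_int t * 2 * pi"
proof -
  have "cos x = 1" using assms by (metis cis.sel(1) one_complex.sel(1))
  thus ?thesis using cos_one_2pi_int by blast
qed

lemma geo_cis:
  fixes l :: nat and d :: int
  assumes "l > 0" "\<bar>d\<bar> < int l"
  shows "(\<Sum>m\<in>{0..<l}. cis (2*pi*real m * of_int d / real l)) = (if d = 0 then of_nat l else 0)"
proof (cases "d = 0")
  case True thus ?thesis by simp
next
  case False
  define z where "z = cis (2*pi*of_int d / real l)"
  have zm: "cis (2*pi*real m * of_int d / real l) = z ^ m" for m
    unfolding z_def DeMoivre by (simp add: mult.commute mult.left_commute)
  have c: "cis (2 * (pi * real_of_int d)) = 1" using cis_multiple_2pi[of "real_of_int d"] by (simp add: mult.assoc)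
  have "cis (2*pi*real l * of_int d / real l) = 1" using assms(1) c by simp
  hence zl: "z ^ l = 1" using zm[of l] by simp
  have z1: "z \<noteq> 1"
  proof
    assume "z = 1"
    then obtain t :: int where t: "2*pi*of_int d / real l = of_int t*2*pi" using cis_eq_1_int[of "2*pi*of_int d / real l"] z_def by auto
    hence "real_of_int d = t * real l" using assms(1) by (simp add: field_simps)
    hence "d = t * int l" by (metis of_int_eq_iff of_int_mult of_int_of_nat_eq)
    hence t0: "t \<noteq> 0" using False by auto
    have "\<bar>d\<bar> = \<bar>t\<bar> * int l" using \<open>d = t * int l\<close> by (simp add: abs_mult)
    moreover have "\<bar>t\<bar> \<ge> 1" using t0 by linarith
    ultimately have "\<bar>d\<bar> \<ge> int l" by (simp add: mult_le_cancel_right1)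
    thus False using assms(2) by linarith
  qed
  have "(\<Sum>m\<in>{0..<l}. z^m) = 0"
    using power_diff_1_eq[of z l] zl z1 by (simp add: lessThan_atLeast0)
  thus ?thesis using zm False by simp
qed

lemma cis_pow_dvd:
  fixes n k :: nat and d :: int
  assumes "n > 0" "cis (2*pi*of_int d / real n) ^ k = 1"
  shows "int n dvd d * int k"
proof -
  have "cis (2*pi*of_int (d * int k) / real n) = 1" using assms(2) unfolding DeMoivre
    by (simp add: mult.commute mult.left_commute)
  then obtain t :: int where "2*pi*of_int (d * int k) / real n = of_int t*2*pi" using cis_eq_1_int by blast
  hence "real_of_int (d * int k) = t * real n" using assms(1) by (simp add: field_simps)
  hence "d * int k = t * int n" by (metis of_int_eq_iff of_int_mult of_int_of_nat_eq)
  thus ?thesis by simp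
qed

lemma ctrans_dims[simp]: "dim_row (ctrans A) = dim_col A" "dim_col (ctrans A) = dim_row A"
  by (simp_all add: ctrans_def)
lemma index_ctrans[simp]: "i < dim_col A \<Longrightarrow> j < dim_row A \<Longrightarrow> ctrans A $$ (i,j) = cnj (A $$ (j,i))"
  by (simp add: ctrans_def)
lemma ctrans_ctrans[simp]: "ctrans (ctrans A) = A"
  by (rule eq_matI) simp_all
lemma ctrans_mult: assumes "dim_col A = dim_row B" shows "ctrans (A*B) = ctrans B * ctrans A"
proof (rule eq_matI)
  fix i j assume ij: "i < dim_row (ctrans B * ctrans A)" "j < dim_col (ctrans B * ctrans A)"
  show "ctrans (A*B) $$ (i,j) = (ctrans B * ctrans A) $$ (i,j)"
    using ij assms by (auto simp: scalar_prod_def mult.commute intro!: sum.cong)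
qed simp_all
lemma ctrans_smult: "ctrans (c \<cdot>\<^sub>m A) = cnj c \<cdot>\<^sub>m ctrans A"
  by (rule eq_matI) auto
lemma ctrans_one[simp]: "ctrans (1\<^sub>m n) = 1\<^sub>m n"
  by (rule eq_matI) auto
lemma DFT_carrier: "DFT l \<in> carrier_mat l l" by (simp add: DFT_def)

lemma DFT_idx: "r < l \<Longrightarrow> s < l \<Longrightarrow> DFT l $$ (r,s) = complex_of_real (1 / sqrt (real l)) * cis (- 2 * pi * real r * real s / real l)"
  by (simp add: DFT_def)

lemma cis_mult_eq: "x + y = z \<Longrightarrow> cis x * cis y = cis z" by (simp add: cis_mult)

lemma sqrt_inv_sq: "l > 0 \<Longrightarrow> complex_of_real (1 / sqrt (real l)) * complex_of_real (1 / sqrt (real l)) = 1 / of_nat l"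
proof -
  assume "l > 0"
  have "(1 / sqrt (real l)) * (1 / sqrt (real l)) = 1 / real l" using \<open>l>0\<close> by (simp add: real_sqrt_mult[symmetric])
  hence "complex_of_real ((1 / sqrt (real l)) * (1 / sqrt (real l))) = complex_of_real (1 / real l)" by simp
  thus ?thesis by (simp only: of_real_mult) simp
qed

lemma DFT_unitary1: assumes "l > 0" shows "ctrans (DFT l) * DFT l = 1\<^sub>m l"
proof (rule eq_matI)
  fix a b assume ab: "a < dim_row (1\<^sub>m l :: complex mat)" "b < dim_col (1\<^sub>m l :: complex mat)"
  hence ab: "a < l" "b < l" by auto
  have "(ctrans (DFT l) * DFT l) $$ (a,b) = (\<Sum>i\<in>{0..<l}. cnj (DFT l $$ (i,a)) * DFT l $$ (i,b))"
    using ab DFT_carrier[of l] by (simp add: scalar_prod_def)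
  also have "\<dots> = (\<Sum>i\<in>{0..<l}. 1 / of_nat l * cis (2*pi*real i * of_int (int a - int b) / real l))"
  proof (rule sum.cong)
    fix i assume "i \<in> {0..<l}"
    hence i: "i < l" by simp
    have e: "cis (- (- 2 * pi * real i * real a / real l)) * cis (- 2 * pi * real i * real b / real l)
       = cis (2*pi*real i * of_int (int a - int b) / real l)"
      using assms by (intro cis_mult_eq) (simp add: field_simps)
    show "cnj (DFT l $$ (i,a)) * DFT l $$ (i,b) = 1 / of_nat l * cis (2*pi*real i * of_int (int a - int b) / real l)"
      using ab i e sqrt_inv_sq[OF assms] by (simp add: DFT_idx cis_cnj mult_ac)
  qed simp
  also have "\<dots> = 1 / of_nat l * (\<Sum>i\<in>{0..<l}. cis (2*pi*real i * of_int (int a - int b) / real l))"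
    by (simp only: sum_distrib_left)
  also have "\<dots> = 1 / of_nat l * (if int a - int b = 0 then of_nat l else 0)"
  proof -
    have "\<bar>int a - int b\<bar> < int l" using ab by linarith
    from geo_cis[OF assms this] show ?thesis by (simp only:)
  qed
  also have "\<dots> = 1\<^sub>m l $$ (a,b)" using ab assms by auto
  finally show "(ctrans (DFT l) * DFT l) $$ (a,b) = 1\<^sub>m l $$ (a,b)" .
qed (auto simp: DFT_def)

lemma DFT_unitary2: assumes "l > 0" shows "DFT l * ctrans (DFT l) = 1\<^sub>m l"
proof (rule eq_matI)
  fix a b assume ab: "a < dim_row (1\<^sub>m l :: complex mat)" "b < dim_col (1\<^sub>m l :: complex mat)"
  hence ab: "a < l" "b < l" by auto
  have "(DFT l * ctrans (DFT l)) $$ (a,b) = (\<Sum>i\<in>{0..<l}. DFT l $$ (a,i) * cnj (DFT l $$ (b,i)))"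
    using ab DFT_carrier[of l] by (simp add: scalar_prod_def)
  also have "\<dots> = (\<Sum>i\<in>{0..<l}. 1 / of_nat l * cis (2*pi*real i * of_int (int b - int a) / real l))"
  proof (rule sum.cong)
    fix i assume "i \<in> {0..<l}"
    hence i: "i < l" by simp
    have e: "cis (- 2 * pi * real a * real i / real l) * cis (- (- 2 * pi * real b * real i / real l))
       = cis (2*pi*real i * of_int (int b - int a) / real l)"
      using assms by (intro cis_mult_eq) (simp add: field_simps)
    show "DFT l $$ (a,i) * cnj (DFT l $$ (b,i)) = 1 / of_nat l * cis (2*pi*real i * of_int (int b - int a) / real l)"
      using ab i e sqrt_inv_sq[OF assms] by (simp add: DFT_idx cis_cnj mult_ac)
  qed simp
  also have "\<dots> = 1 / of_nat l * (\<Sum>i\<in>{0..<l}. cis (2*pi*real i * of_int (int b - int a) / real l))"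
    by (simp only: sum_distrib_left)
  also have "\<dots> = 1 / of_nat l * (if int b - int a = 0 then of_nat l else 0)"
  proof -
    have "\<bar>int b - int a\<bar> < int l" using ab by linarith
    from geo_cis[OF assms this] show ?thesis by (simp only:)
  qed
  also have "\<dots> = 1\<^sub>m l $$ (a,b)" using ab assms by auto
  finally show "(DFT l * ctrans (DFT l)) $$ (a,b) = 1\<^sub>m l $$ (a,b)" .
qed (auto simp: DFT_def)

lemma ctrans_carrier: "A \<in> carrier_mat m n \<Longrightarrow> ctrans A \<in> carrier_mat n m"
  by (rule carrier_matI) (simp_all only: ctrans_dims carrier_matD)

definition sf :: "nat \<Rightarrow> nat \<Rightarrow> nat \<Rightarrow> nat \<Rightarrow> nat" where
  "sf n k a j = (if j < a then j else n - k + j)"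

lemma Sigma_idx: assumes "a \<le> k" "k \<le> n" "i < n" "j < k"
  shows "Sigma n k a $$ (i,j) = (if i = sf n k a j then 1 else 0)"
proof -
  have "Sigma n k a $$ (i,j) = (if i < a \<and> j = i then 1
      else if n - (k - a) \<le> i \<and> a \<le> j \<and> j - a = i - (n - (k - a)) then 1 else 0)"
    using assms by (simp add: Sigma_def)
  also have "\<dots> = (if i = sf n k a j then 1 else 0)"
  proof (cases "j < a")
    case True thus ?thesis by (auto simp: sf_def)
  next
    case False
    have "(n - (k - a) \<le> i \<and> a \<le> j \<and> j - a = i - (n - (k - a))) = (i = n - k + j)"
      using False assms by linarith
    moreover have "sf n k a j = n - k + j" using False by (simp add: sf_def)
    moreover have "\<not> (i < a \<and> j = i)" using False by auto
    ultimately show ?thesis by (simp only: if_False)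
  qed
  finally show ?thesis .
qed
lemma sf_lt: "a \<le> k \<Longrightarrow> k \<le> n \<Longrightarrow> j < k \<Longrightarrow> sf n k a j < n"
  by (auto simp: sf_def)

lemma sf_inj: "a \<le> k \<Longrightarrow> k \<le> n \<Longrightarrow> i < k \<Longrightarrow> j < k \<Longrightarrow> sf n k a i = sf n k a j \<Longrightarrow> i = j"
  by (auto simp: sf_def split: if_splits)

lemma Sigma_carrier: "Sigma n k a \<in> carrier_mat n k" unfolding Sigma_def by (rule mat_carrier)

definition Bm :: "nat \<Rightarrow> nat \<Rightarrow> nat \<Rightarrow> complex mat" where
  "Bm n k a = ctrans (DFT n) * Sigma n k a"

lemma Bm_carrier: "Bm n k a \<in> carrier_mat n k"
  unfolding Bm_def by (rule mult_carrier_mat[OF ctrans_carrier[OF DFT_carrier] Sigma_carrier])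

lemma Bm_idx: assumes "a \<le> k" "k \<le> n" "p < n" "j < k"
  shows "Bm n k a $$ (p,j) = complex_of_real (1 / sqrt (real n)) * cis (2 * pi * real p * real (sf n k a j) / real n)"
proof -
  have "Bm n k a $$ (p,j) = (\<Sum>i\<in>{0..<n}. cnj (DFT n $$ (i,p)) * Sigma n k a $$ (i,j))"
    using assms DFT_carrier[of n] Sigma_carrier[of n k a] by (simp add: Bm_def scalar_prod_def)
  also have "\<dots> = (\<Sum>i\<in>{0..<n}. if i = sf n k a j then cnj (DFT n $$ (sf n k a j,p)) else 0)"
    by (rule sum.cong) (use assms in \<open>auto simp: Sigma_idx\<close>)
  also have "\<dots> = cnj (DFT n $$ (sf n k a j,p))"
    using sf_lt[OF assms(1,2,4)] by simp
  also have "\<dots> = complex_of_real (1 / sqrt (real n)) * cis (2 * pi * real p * real (sf n k a j) / real n)"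
    using sf_lt[OF assms(1,2,4)] assms(3) by (simp add: DFT_idx cis_cnj mult_ac)
  finally show ?thesis .
qed


lemma Bm_iso: assumes "a \<le> k" "k \<le> n" shows "ctrans (Bm n k a) * Bm n k a = 1\<^sub>m k"
proof (rule eq_matI)
  fix i j assume ij: "i < dim_row (1\<^sub>m k :: complex mat)" "j < dim_col (1\<^sub>m k :: complex mat)"
  hence ij: "i < k" "j < k" by auto
  have n0: "n > 0" using ij assms by linarith
  define d where "d = int (sf n k a j) - int (sf n k a i)"
  have "(ctrans (Bm n k a) * Bm n k a) $$ (i,j) = (\<Sum>p\<in>{0..<n}. cnj (Bm n k a $$ (p,i)) * Bm n k a $$ (p,j))"
    using ij Bm_carrier[of n k a] by (simp add: scalar_prod_def)
  also have "\<dots> = (\<Sum>p\<in>{0..<n}. 1 / of_nat n * cis (2*pi*real p * of_int d / real n))"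
  proof (rule sum.cong)
    fix p assume "p \<in> {0..<n}"
    hence p: "p < n" by simp
    have e: "cis (- (2 * pi * real p * real (sf n k a i) / real n)) * cis (2 * pi * real p * real (sf n k a j) / real n)
       = cis (2*pi*real p * of_int d / real n)"
      using n0 by (intro cis_mult_eq) (simp add: field_simps d_def)
    show "cnj (Bm n k a $$ (p,i)) * Bm n k a $$ (p,j) = 1 / of_nat n * cis (2*pi*real p * of_int d / real n)"
      using ij p e sqrt_inv_sq[OF n0] assms by (simp add: Bm_idx cis_cnj mult_ac)
  qed simp
  also have "\<dots> = 1 / of_nat n * (\<Sum>p\<in>{0..<n}. cis (2*pi*real p * of_int d / real n))"
    by (simp only: sum_distrib_left)
  also have "\<dots> = 1 / of_nat n * (if d = 0 then of_nat n else 0)"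
  proof -
    have "\<bar>d\<bar> < int n" using sf_lt[OF assms ij(1)] sf_lt[OF assms ij(2)] unfolding d_def by linarith
    from geo_cis[OF n0 this] show ?thesis by (simp only:)
  qed
  also have "\<dots> = 1\<^sub>m k $$ (i,j)" using ij n0 sf_inj[OF assms ij] by (auto simp: d_def)
  finally show "(ctrans (Bm n k a) * Bm n k a) $$ (i,j) = 1\<^sub>m k $$ (i,j)" .
qed (insert Bm_carrier[of n k a], auto)



lemma tele:
  fixes z w :: complex
  assumes "a \<le> k"
  shows "(z - 1) * (\<Sum>j\<in>{0..<k}. if j < a then z^j else w * z^j) = (z^a - 1) + w * (z^k - z^a)"
proof -
  obtain m where k: "k = a + m" using assms le_Suc_ex by blast
  have "(z - 1) * (\<Sum>j\<in>{0..<a + m}. if j < a then z^j else w * z^j) = (z^a - 1) + w * (z^(a+m) - z^a)"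
  proof (induction m)
    case 0
    have "(\<Sum>j\<in>{0..<a}. if j < a then z^j else w * z^j) = (\<Sum>j<a. z^j)"
      by (simp add: lessThan_atLeast0)
    thus ?case using power_diff_1_eq[of z a] by simp
  next
    case (Suc m)
    have "(z - 1) * (\<Sum>j\<in>{0..<a + Suc m}. if j < a then z^j else w * z^j)
        = (z - 1) * (\<Sum>j\<in>{0..<a + m}. if j < a then z^j else w * z^j) + (z - 1) * (w * z^(a+m))"
      by (simp add: distrib_left)
    also have "\<dots> = (z^a - 1) + w * (z^(a+Suc m) - z^a)"
      using Suc.IH by (simp add: algebra_simps)
    finally show ?case .
  qed
  thus ?thesis using k by simp
qed

lemma sum_zero_pow:
  fixes z :: complex
  assumes "a \<le> k" "k \<le> n" "z ^ n = 1" "(\<Sum>j\<in>{0..<k}. z ^ sf n k a j) = 0" "0 < n"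
  shows "z ^ k = 1"
proof -
  have z0: "z \<noteq> 0" proof
    assume "z = 0" thus False using assms(3,5) by (simp add: power_0_left)
  qed
  have "(\<Sum>j\<in>{0..<k}. z ^ sf n k a j) = (\<Sum>j\<in>{0..<k}. if j < a then z^j else z^(n-k) * z^j)"
    by (rule sum.cong) (auto simp: sf_def power_add)
  hence "0 = (z - 1) * (\<Sum>j\<in>{0..<k}. if j < a then z^j else z^(n-k) * z^j)" using assms(4) by simp
  also have "\<dots> = (z^a - 1) + z^(n-k) * (z^k - z^a)" by (rule tele[OF assms(1)])
  finally have e: "0 = (z^a - 1) + z^(n-k) * (z^k - z^a)" .
  have nk: "z^(n-k) * z^k = 1" using assms(2,3) by (simp add: power_add[symmetric])
  have "0 = z^k * ((z^a - 1) + z^(n-k) * (z^k - z^a))" using e by simp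
  also have "\<dots> = z^k * z^a - z^k + (z^(n-k) * z^k) * (z^k - z^a)" by (simp add: algebra_simps)
  also have "\<dots> = z^a * (z^k - 1)" using nk by (simp add: algebra_simps)
  finally have "z^a * (z^k - 1) = 0" by simp
  thus ?thesis using z0 by simp
qed

lemma Bm_BH: assumes "a \<le> k" "k \<le> n" "p < n" "q < n"
  shows "(Bm n k a * ctrans (Bm n k a)) $$ (p,q) =
     1 / of_nat n * (\<Sum>j\<in>{0..<k}. cis (2*pi*of_int (int p - int q) / real n) ^ sf n k a j)"
proof -
  have n0: "n > 0" using assms by linarith
  have "(Bm n k a * ctrans (Bm n k a)) $$ (p,q) = (\<Sum>j\<in>{0..<k}. Bm n k a $$ (p,j) * cnj (Bm n k a $$ (q,j)))"
    using assms Bm_carrier[of n k a] by (simp add: scalar_prod_def)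
  also have "\<dots> = (\<Sum>j\<in>{0..<k}. 1 / of_nat n * cis (2*pi*of_int (int p - int q) / real n) ^ sf n k a j)"
  proof (rule sum.cong)
    fix j assume "j \<in> {0..<k}"
    hence j: "j < k" by simp
    have e: "cis (2 * pi * real p * real (sf n k a j) / real n) * cis (- (2 * pi * real q * real (sf n k a j) / real n))
       = cis (2*pi*of_int (int p - int q) / real n) ^ sf n k a j"
      unfolding DeMoivre using n0 by (intro cis_mult_eq) (simp add: field_simps)
    show "Bm n k a $$ (p,j) * cnj (Bm n k a $$ (q,j)) = 1 / of_nat n * cis (2*pi*of_int (int p - int q) / real n) ^ sf n k a j"
      using j assms e sqrt_inv_sq[OF n0] by (simp add: Bm_idx cis_cnj mult_ac)
  qed simp
  also have "\<dots> = 1 / of_nat n * (\<Sum>j\<in>{0..<k}. cis (2*pi*of_int (int p - int q) / real n) ^ sf n k a j)"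
    by (simp only: sum_distrib_left)
  finally show ?thesis .
qed



lemma pigeon:
  fixes n k :: nat and S :: "nat set"
  assumes k0: "0 < k" and nk: "\<not> k dvd n" and Ssub: "S \<subseteq> {0..<n}" and cS: "card S = k"
    and dv: "\<forall>x\<in>S. \<forall>y\<in>S. int n dvd (int x - int y) * int k"
  shows False
proof -
  define g where "g = gcd n k"
  have g0: "g > 0" using k0 by (simp add: g_def)
  define m where "m = n div g"
  define k' where "k' = k div g"
  have nm: "n = m * g" by (simp add: m_def g_def)
  have kk: "k = k' * g" by (simp add: k'_def g_def)
  have cop: "coprime m k'" unfolding m_def k'_def g_def using k0 by (intro div_gcd_coprime) simp
  hence copi: "coprime (int m) (int k')" by simp
  have m0: "m > 0" using nm
    by (metis assms(4) card.empty empty_subsetI gr0I k0 lessThan_atLeast0 lessThan_empty_iff mult_is_0 neq0_conv subset_antisym Ssub)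
  have modeq: "x mod m = y mod m" if "x \<in> S" "y \<in> S" for x y
  proof -
    have "int (m*g) dvd ((int x - int y) * int k') * int g"
      using dv that nm kk by (metis mult.assoc of_nat_mult)
    hence "int m * int g dvd ((int x - int y) * int k') * int g" by simp
    hence "int m dvd (int x - int y) * int k'" using g0 by (simp add: dvd_times_right_cancel_iff)
    hence "int m dvd int x - int y" using copi by (simp add: coprime_dvd_mult_left_iff)
    hence "int x mod int m = int y mod int m" by (simp add: mod_eq_dvd_iff)
    thus ?thesis by (metis of_nat_eq_iff of_nat_mod)
  qed
  have inj: "inj_on (\<lambda>x. x div m) S"
  proof (rule inj_onI)
    fix x y assume "x \<in> S" "y \<in> S" "x div m = y div m"
    thus "x = y" using modeq by (metis div_mult_mod_eq)
  qed
  have img: "(\<lambda>x. x div m) ` S \<subseteq> {0..<g}"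
  proof
    fix z assume "z \<in> (\<lambda>x. x div m) ` S"
    then obtain x where x: "x \<in> S" "z = x div m" by blast
    have "x < m * g" using x Ssub nm by auto
    hence "x div m < g" using m0 by (simp add: div_less_iff_less_mult mult.commute)
    thus "z \<in> {0..<g}" using x by simp
  qed
  have "k \<le> g" using card_inj_on_le[OF inj img] cS by simp
  moreover have "g \<le> k" unfolding g_def using k0 by (simp add: gcd_le2_nat)
  ultimately have "g = k" by simp
  hence "k dvd n" unfolding g_def by (metis gcd_dvd1)
  thus False using nk by simp
qed


lemma smult_smult_m: "x \<cdot>\<^sub>m (y \<cdot>\<^sub>m X) = (x * y) \<cdot>\<^sub>m (X :: complex mat)"
  by (rule eq_matI) auto

lemma cis_root_pow: assumes "n > 0" shows "cis (2*pi*of_int d / real n) ^ n = 1"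
proof -
  have c: "cis (2 * (pi * real_of_int d)) = 1" using cis_multiple_2pi[of "real_of_int d"] by (simp add: mult.assoc)
  show ?thesis unfolding DeMoivre using assms c by simp
qed

theorem corollary1:
  fixes n k :: nat
  assumes "1 \<le> k" and "k < n"
    and "\<not> (even n \<and> even k)"
    and "\<forall>M::nat. M > 0 \<longrightarrow> n \<noteq> M * k"
  shows "\<forall>rs Gk_inv.
           inj_on rs {0..<k} \<and> rs ` {0..<k} \<subseteq> {0..<n} \<and>
           Gk_inv \<in> carrier_mat k k \<and>
           row_submat (Gmat n k ((n + 1) div 2 - (n - k) div 2)) k rs * Gk_inv = 1\<^sub>m k \<and>
           Gk_inv * row_submat (Gmat n k ((n + 1) div 2 - (n - k) div 2)) k rs = 1\<^sub>m k
           \<longrightarrow> \<not> tight_frame (Gmat n k ((n + 1) div 2 - (n - k) div 2) * Gk_inv)"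
proof (intro allI impI)
  fix rs Ginv
  define a where "a = (n + 1) div 2 - (n - k) div 2"
  assume H: "inj_on rs {0..<k} \<and> rs ` {0..<k} \<subseteq> {0..<n} \<and>
           Ginv \<in> carrier_mat k k \<and>
           row_submat (Gmat n k ((n + 1) div 2 - (n - k) div 2)) k rs * Ginv = 1\<^sub>m k \<and>
           Ginv * row_submat (Gmat n k ((n + 1) div 2 - (n - k) div 2)) k rs = 1\<^sub>m k"
  define G where "G = Gmat n k a"
  define A where "A = row_submat G k rs"
  have inj: "inj_on rs {0..<k}" and rsn: "rs ` {0..<k} \<subseteq> {0..<n}" and Gi: "Ginv \<in> carrier_mat k k"
    and AG: "A * Ginv = 1\<^sub>m k" and GA: "Ginv * A = 1\<^sub>m k"
    using H by (simp_all add: A_def G_def a_def)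
  have ndvd: "\<not> k dvd n"
  proof
    assume "k dvd n"
    then obtain M where "n = k * M" by blast
    moreover have "M > 0" using calculation assms(2) by (cases M) auto
    ultimately show False using assms(4) by (auto simp: mult.commute)
  qed
  have k2: "k \<ge> 2" using ndvd assms(1) by (cases "k = 1") auto
  have ak: "a \<le> k" unfolding a_def using k2 assms(2) by presburger
  have kn: "k \<le> n" using assms(2) by simp
  have n0: "n > 0" using assms by simp
  have k0: "k > 0" using assms by simp
  define s where "s = complex_of_real (sqrt (real n / real k))"
  define r where "r = s * s"
  have r: "r = complex_of_real (real n / real k)" unfolding r_def s_def
    by (simp only: of_real_mult[symmetric]) (simp add: n0 k0)
  have r0: "r \<noteq> 0" using r n0 k0 by simp
  have cs: "cnj s = s" by (simp add: s_def)
  define B where "B = Bm n k a"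
  define W where "W = DFT k"
  define Hm where "Hm = B * W"
  have Bc: "B \<in> carrier_mat n k" unfolding B_def by (rule Bm_carrier)
  have Wc: "W \<in> carrier_mat k k" unfolding W_def by (rule DFT_carrier)
  have Hc: "Hm \<in> carrier_mat n k" unfolding Hm_def using Bc Wc by simp
  have Gdef: "G = s \<cdot>\<^sub>m Hm" unfolding G_def Gmat_def Hm_def B_def W_def Bm_def s_def ..
  have Gc: "G \<in> carrier_mat n k" using Hc Gdef by simp
  have cH: "ctrans Hm = ctrans W * ctrans B" unfolding Hm_def using Bc Wc by (intro ctrans_mult) simp
  have cBc: "ctrans B \<in> carrier_mat k n" using Bc by (rule ctrans_carrier)
  have cWc: "ctrans W \<in> carrier_mat k k" using Wc by (rule ctrans_carrier)
  have cHc: "ctrans Hm \<in> carrier_mat k n" using Hc by (rule ctrans_carrier)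
  have HH: "ctrans Hm * Hm = 1\<^sub>m k"
  proof -
    have "ctrans Hm * Hm = ctrans W * ctrans B * (B * W)" using cH Hm_def by simp
    also have "\<dots> = ctrans W * (ctrans B * (B * W))"
      using Hc unfolding Hm_def by (rule assoc_mult_mat[OF cWc cBc])
    also have "ctrans B * (B * W) = (ctrans B * B) * W"
      by (rule assoc_mult_mat[OF cBc Bc Wc, symmetric])
    also have "ctrans W * ((ctrans B * B) * W) = ctrans W * (ctrans B * B) * W"
      by (rule assoc_mult_mat[OF cWc mult_carrier_mat[OF cBc Bc] Wc, symmetric])
    also have "\<dots> = ctrans W * 1\<^sub>m k * W" using Bm_iso[OF ak kn] unfolding B_def by simp
    also have "\<dots> = 1\<^sub>m k" using right_mult_one_mat[OF cWc] DFT_unitary1[OF k0] unfolding W_def by simp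
    finally show ?thesis .
  qed
  have HH2: "Hm * ctrans Hm = B * ctrans B"
  proof -
    have "Hm * ctrans Hm = B * W * (ctrans W * ctrans B)" using cH Hm_def by simp
    also have "\<dots> = B * (W * (ctrans W * ctrans B))"
      by (rule assoc_mult_mat[OF Bc Wc mult_carrier_mat[OF cWc cBc]])
    also have "W * (ctrans W * ctrans B) = (W * ctrans W) * ctrans B"
      by (rule assoc_mult_mat[OF Wc cWc cBc, symmetric])
    also have "B * ((W * ctrans W) * ctrans B) = B * (W * ctrans W) * ctrans B"
      by (rule assoc_mult_mat[OF Bc mult_carrier_mat[OF Wc cWc] cBc, symmetric])
    also have "\<dots> = B * ctrans B" using DFT_unitary2[OF k0] Bc unfolding W_def by simp
    finally show ?thesis .
  qed
  have cG: "ctrans G = s \<cdot>\<^sub>m ctrans Hm" using Gdef cs by (simp add: ctrans_smult)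
  have GG: "ctrans G * G = r \<cdot>\<^sub>m 1\<^sub>m k"
  proof -
    have "ctrans G * G = (s \<cdot>\<^sub>m ctrans Hm) * (s \<cdot>\<^sub>m Hm)" using cG Gdef by simp
    also have "\<dots> = s \<cdot>\<^sub>m (ctrans Hm * (s \<cdot>\<^sub>m Hm))"
      by (rule mult_smult_assoc_mat[OF cHc smult_carrier_mat[OF Hc]])
    also have "ctrans Hm * (s \<cdot>\<^sub>m Hm) = s \<cdot>\<^sub>m (ctrans Hm * Hm)"
      by (rule mult_smult_distrib[OF cHc Hc])
    finally show ?thesis using HH by (simp add: smult_smult_m r_def)
  qed
  have GG2: "G * ctrans G = r \<cdot>\<^sub>m (B * ctrans B)"
  proof -
    have "G * ctrans G = (s \<cdot>\<^sub>m Hm) * (s \<cdot>\<^sub>m ctrans Hm)" using cG Gdef by simp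
    also have "\<dots> = s \<cdot>\<^sub>m (Hm * (s \<cdot>\<^sub>m ctrans Hm))"
      by (rule mult_smult_assoc_mat[OF Hc smult_carrier_mat[OF cHc]])
    also have "Hm * (s \<cdot>\<^sub>m ctrans Hm) = s \<cdot>\<^sub>m (Hm * ctrans Hm)"
      by (rule mult_smult_distrib[OF Hc cHc])
    finally show ?thesis using HH2 by (simp add: smult_smult_m r_def)
  qed
  have Gd: "dim_row G = n" "dim_col G = k" using Gc by (simp_all only: carrier_matD)
  have Ad: "dim_row A = k" "dim_col A = k" unfolding A_def row_submat_def using Gd by simp_all
  have Ac: "A \<in> carrier_mat k k" using Ad by (rule carrier_matI)
  have Aidx: "A $$ (i,l) = G $$ (rs i, l)" if "i < k" "l < k" for i l
    using that Gd unfolding A_def row_submat_def by simp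
  have AA: "(A * ctrans A) $$ (i,j) = (G * ctrans G) $$ (rs i, rs j)" if "i < k" "j < k" for i j
  proof -
    have "rs i \<in> {0..<n}" "rs j \<in> {0..<n}" using rsn that by (simp_all add: image_subset_iff)
    hence ri: "rs i < n" "rs j < n" by auto
    have "(A * ctrans A) $$ (i,j) = (\<Sum>l\<in>{0..<k}. A $$ (i,l) * cnj (A $$ (j,l)))"
      using that Ad by (simp add: scalar_prod_def)
    also have "\<dots> = (\<Sum>l\<in>{0..<k}. G $$ (rs i,l) * cnj (G $$ (rs j,l)))"
      using that by (intro sum.cong) (simp_all add: Aidx)
    also have "\<dots> = (G * ctrans G) $$ (rs i, rs j)"
      using ri Gd by (simp add: scalar_prod_def)
    finally show ?thesis .
  qed
  show "\<not> tight_frame (Gmat n k ((n + 1) div 2 - (n - k) div 2) * Ginv)"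
  proof
    assume T: "tight_frame (Gmat n k ((n + 1) div 2 - (n - k) div 2) * Ginv)"
    hence "tight_frame (G * Ginv)" by (simp add: G_def a_def)
    then obtain c :: real where c0: "c > 0"
      and cF: "ctrans (G*Ginv) * (G*Ginv) = complex_of_real c \<cdot>\<^sub>m 1\<^sub>m (dim_col (G*Ginv))"
      unfolding tight_frame_def by blast
    have Gid: "dim_row Ginv = k" "dim_col Ginv = k" using Gi by (simp_all only: carrier_matD)
    have dF: "dim_col (G * Ginv) = k" using Gid by simp
    have cGi: "ctrans Ginv \<in> carrier_mat k k" using Gi by (rule ctrans_carrier)
    have cGc: "ctrans G \<in> carrier_mat k n" using Gc by (rule ctrans_carrier)
    have cAc: "ctrans A \<in> carrier_mat k k" using Ac by (rule ctrans_carrier)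
    have cF2: "ctrans (G*Ginv) = ctrans Ginv * ctrans G" using Gd Gid by (intro ctrans_mult) simp
    have "ctrans (G*Ginv) * (G*Ginv) = ctrans Ginv * ctrans G * (G*Ginv)" using cF2 by simp
    also have "\<dots> = ctrans Ginv * (ctrans G * (G * Ginv))"
      by (rule assoc_mult_mat[OF cGi cGc mult_carrier_mat[OF Gc Gi]])
    also have "ctrans G * (G * Ginv) = (ctrans G * G) * Ginv"
      by (rule assoc_mult_mat[OF cGc Gc Gi, symmetric])
    also have "\<dots> = (r \<cdot>\<^sub>m 1\<^sub>m k) * Ginv" using GG by simp
    also have "\<dots> = r \<cdot>\<^sub>m (1\<^sub>m k * Ginv)" by (rule mult_smult_assoc_mat[OF one_carrier_mat Gi])
    also have "1\<^sub>m k * Ginv = Ginv" by (rule left_mult_one_mat[OF Gi])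
    also have "ctrans Ginv * (r \<cdot>\<^sub>m Ginv) = r \<cdot>\<^sub>m (ctrans Ginv * Ginv)"
      by (rule mult_smult_distrib[OF cGi Gi])
    finally have E: "r \<cdot>\<^sub>m (ctrans Ginv * Ginv) = complex_of_real c \<cdot>\<^sub>m 1\<^sub>m k" using cF dF by simp
    define l where "l = complex_of_real c / r"
    have l0: "l \<noteq> 0" using c0 r0 by (simp add: l_def)
    have X: "ctrans Ginv * Ginv = l \<cdot>\<^sub>m 1\<^sub>m k"
    proof (rule eq_matI)
      fix i j assume ij: "i < dim_row (l \<cdot>\<^sub>m 1\<^sub>m k :: complex mat)" "j < dim_col (l \<cdot>\<^sub>m 1\<^sub>m k :: complex mat)"
      hence ij: "i < k" "j < k" by simp_all
      have "(r \<cdot>\<^sub>m (ctrans Ginv * Ginv)) $$ (i,j) = (complex_of_real c \<cdot>\<^sub>m 1\<^sub>m k) $$ (i,j)"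
        using E by simp
      hence "r * (ctrans Ginv * Ginv) $$ (i,j) = complex_of_real c * (if i = j then 1 else 0)"
        using ij Gid by simp
      thus "(ctrans Ginv * Ginv) $$ (i,j) = (l \<cdot>\<^sub>m 1\<^sub>m k) $$ (i,j)"
        using ij r0 by (simp add: l_def field_simps)
    qed (simp_all add: Gid)
    have "ctrans Ginv = ctrans Ginv * 1\<^sub>m k" by (rule right_mult_one_mat[OF cGi, symmetric])
    also have "\<dots> = ctrans Ginv * (Ginv * A)" using GA by simp
    also have "\<dots> = (ctrans Ginv * Ginv) * A" by (rule assoc_mult_mat[OF cGi Gi Ac, symmetric])
    also have "\<dots> = (l \<cdot>\<^sub>m 1\<^sub>m k) * A" using X by simp
    also have "\<dots> = l \<cdot>\<^sub>m (1\<^sub>m k * A)" by (rule mult_smult_assoc_mat[OF one_carrier_mat Ac])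
    also have "1\<^sub>m k * A = A" by (rule left_mult_one_mat[OF Ac])
    finally have cGinv: "ctrans Ginv = l \<cdot>\<^sub>m A" .
    have Gv: "Ginv = cnj l \<cdot>\<^sub>m ctrans A"
      using arg_cong[OF cGinv, of ctrans] by (simp add: ctrans_smult)
    have "1\<^sub>m k = A * (cnj l \<cdot>\<^sub>m ctrans A)" using AG Gv by simp
    also have "\<dots> = cnj l \<cdot>\<^sub>m (A * ctrans A)" by (rule mult_smult_distrib[OF Ac cAc])
    finally have AA1: "cnj l \<cdot>\<^sub>m (A * ctrans A) = 1\<^sub>m k" by simp
    have orth: "int n dvd (int (rs i) - int (rs j)) * int k" if ij: "i < k" "j < k" "i \<noteq> j" for i j
    proof -
      have "rs i \<in> {0..<n}" "rs j \<in> {0..<n}" using rsn ij by (simp_all add: image_subset_iff)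
      hence ri: "rs i < n" "rs j < n" by auto
      have "(cnj l \<cdot>\<^sub>m (A * ctrans A)) $$ (i,j) = 1\<^sub>m k $$ (i,j)" using AA1 by simp
      hence "cnj l * (A * ctrans A) $$ (i,j) = 0" using ij Ad by simp
      hence "(A * ctrans A) $$ (i,j) = 0" using l0 by simp
      hence "(G * ctrans G) $$ (rs i, rs j) = 0" using AA[OF ij(1,2)] by simp
      hence "(r \<cdot>\<^sub>m (B * ctrans B)) $$ (rs i, rs j) = 0" using GG2 by simp
      hence "r * (B * ctrans B) $$ (rs i, rs j) = 0" using ri Bc by (simp add: carrier_matD)
      hence "(B * ctrans B) $$ (rs i, rs j) = 0" using r0 by simp
      hence "1 / of_nat n * (\<Sum>j'\<in>{0..<k}. cis (2*pi*of_int (int (rs i) - int (rs j)) / real n) ^ sf n k a j') = 0"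
        using Bm_BH[OF ak kn ri] unfolding B_def by simp
      hence S0: "(\<Sum>j'\<in>{0..<k}. cis (2*pi*of_int (int (rs i) - int (rs j)) / real n) ^ sf n k a j') = 0"
        using n0 by simp
      have "cis (2*pi*of_int (int (rs i) - int (rs j)) / real n) ^ k = 1"
        by (rule sum_zero_pow[OF ak kn cis_root_pow[OF n0] S0 n0])
      thus ?thesis by (rule cis_pow_dvd[OF n0])
    qed
    show False
    proof (rule pigeon[OF k0 ndvd, of "rs ` {0..<k}"])
      show "rs ` {0..<k} \<subseteq> {0..<n}" by (rule rsn)
      show "card (rs ` {0..<k}) = k" using card_image[OF inj] by simp
      show "\<forall>x\<in>rs ` {0..<k}. \<forall>y\<in>rs ` {0..<k}. int n dvd (int x - int y) * int k"
      proof (intro ballI)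
        fix x y assume "x \<in> rs ` {0..<k}" "y \<in> rs ` {0..<k}"
        then obtain i j where ij: "i < k" "j < k" "x = rs i" "y = rs j" by auto
        show "int n dvd (int x - int y) * int k"
        proof (cases "i = j")
          case True thus ?thesis using ij by simp
        next
          case False thus ?thesis using orth[OF ij(1,2) False] ij by simp
        qed
      qed
    qed
  qed
qed
end
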